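(* Let $\kappa>0$ and $f\in\mathcal{D}(\mathbb{R})$. Then for all $\lambda\in\mathbb{R}$, $$\mathcal{F}_\kappa(f)(\lambda)=\int_{\mathbb{R}}f(x)\,\mathbf{M}_\kappa(i\lambda x)\,dx=\int_{\mathbb{R}}\big({}^t\chi_\kappa f\big)(x)\,e^{i\lambda x}\,dx,$$ i.e. $\mathcal{F}_\kappa(f)=\mathcal{F}\circ{}^t\chi_\kappa(f)$.
   Context: $\mathcal{D}(\mathbb{R})$ is the space of compactly supported $C^\infty$ functions on $\mathbb{R}$. $\mathbf{M}_\kappa(z)=\sum_{n=0}^\infty\frac{z^n}{\Gamma(\kappa+1+n)}$. The Kummer transform is $\mathcal{F}_\kappa(f)(\lambda)=\int_{\mathbb{R}}f(x)\mathbf{M}_\kappa(i\lambda x)\,dx$, and $\mathcal{F}(g)(\lambda)=\int_{\mathbb{R}}g(x)e^{i\lambda x}\,dx$ is the Fourier transform. The dual intertwining operator is defined for $x\in\mathbb{R}\setminus\{0\}$ by $\big({}^t\chi_\kappa f\big)(x)=\frac{1}{\Gamma(\kappa)}\int_{|x|}^{+\infty}(t-|x|)^{\kappa-1}t^{-\kappa}f(\operatorname{sgn}(x)\,t)\,dt$. *)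

theory Defs
  imports "HOL-Analysis.Analysis"
begin

fun vderiv_iter :: "nat \<Rightarrow> (real \<Rightarrow> complex) \<Rightarrow> real \<Rightarrow> complex" where
  "vderiv_iter 0 f = f"
| "vderiv_iter (Suc n) f = (\<lambda>x. vector_derivative (vderiv_iter n f) (at x))"

definition test_function :: "(real \<Rightarrow> complex) \<Rightarrow> bool" where
  "test_function f \<longleftrightarrow>
     (\<forall>n x. vderiv_iter n f differentiable (at x)) \<and>
     compact (closure {x. f x \<noteq> 0})"

definition kummerM :: "real \<Rightarrow> complex \<Rightarrow> complex" where
  "kummerM \<kappa> z = (\<Sum>n. z ^ n / Gamma (complex_of_real (\<kappa> + 1 + real n)))"

definition kummer_transform :: "real \<Rightarrow> (real \<Rightarrow> complex) \<Rightarrow> real \<Rightarrow> complex" where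
  "kummer_transform \<kappa> f lam =
     (LINT x|lborel. f x * kummerM \<kappa> (\<i> * complex_of_real (lam * x)))"

definition fourier_transform :: "(real \<Rightarrow> complex) \<Rightarrow> real \<Rightarrow> complex" where
  "fourier_transform g lam = (LINT x|lborel. g x * cis (lam * x))"

text \<open>The dual intertwining operator; defined for x \<noteq> 0 (value at 0 is
  irrelevant for integration and set to 0).\<close>
definition dual_intertwining :: "real \<Rightarrow> (real \<Rightarrow> complex) \<Rightarrow> real \<Rightarrow> complex" where
  "dual_intertwining \<kappa> f x =
     (if x = 0 then 0 else
        complex_of_real (1 / Gamma \<kappa>) *
        (LINT t:{\<bar>x\<bar><..}|lborel.
            complex_of_real ((t - \<bar>x\<bar>) powr (\<kappa> - 1) * t powr (- \<kappa>)) * f (sgn x * t)))"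

end

theory Submission
  imports Defs
begin

lemma beta_moment:
  fixes \<kappa> :: real
  assumes k: "\<kappa> > 0"
  shows "integrable lborel (\<lambda>s. indicator {0<..<1} s * ((1-s) powr (\<kappa>-1) * s^n) :: real)"
    and "(\<integral>s. indicator {0<..<1} s * ((1-s) powr (\<kappa>-1) * s^n) \<partial>lborel) = Gamma \<kappa> * fact n / Gamma (\<kappa> + real n + 1)"
proof -
  have si: "set_integrable lborel {0..1} (\<lambda>t. t powr (real (Suc n) - 1) * (1 - t) powr (\<kappa> - 1))"
    using integrable_Beta[of "real (Suc n)" \<kappa>] k by simp
  have ae: "AE s in lborel. indicator {0..1} s *\<^sub>R (s powr (real (Suc n) - 1) * (1 - s) powr (\<kappa> - 1))
      = indicator {0<..<1} s * ((1-s) powr (\<kappa>-1) * s^n)"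
    using AE_lborel_singleton[of 0] AE_lborel_singleton[of 1]
  proof eventually_elim
    case (elim s)
    show ?case
    proof (cases "0 < s \<and> s < 1")
      case True
      then show ?thesis by (simp add: powr_realpow indicator_def)
    next
      case False
      with elim show ?thesis by (auto simp: indicator_def)
    qed
  qed
  show 1: "integrable lborel (\<lambda>s. indicator {0<..<1} s * ((1-s) powr (\<kappa>-1) * s^n) :: real)"
    using si unfolding set_integrable_def by (rule integrable_cong_AE_imp) (use ae in auto)
  have "(\<integral>s. indicator {0<..<1} s * ((1-s) powr (\<kappa>-1) * s^n) \<partial>lborel)
      = (LINT t:{0..1}|lborel. t powr (real (Suc n) - 1) * (1 - t) powr (\<kappa> - 1))"
    unfolding set_lebesgue_integral_def by (rule integral_cong_AE[symmetric]) (use ae in auto)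
  also have "\<dots> = integral {0..1} (\<lambda>t. t powr (real (Suc n) - 1) * (1 - t) powr (\<kappa> - 1))"
    by (rule set_borel_integral_eq_integral(2)[OF si])
  also have "\<dots> = Beta (real (Suc n)) \<kappa>"
    using has_integral_Beta_real[of "real (Suc n)" \<kappa>] k by (simp add: integral_unique)
  also have "\<dots> = Gamma \<kappa> * fact n / Gamma (\<kappa> + real n + 1)"
    using Gamma_fact[of n, where 'a=real] by (simp add: Beta_def add_ac)
  finally show "(\<integral>s. indicator {0<..<1} s * ((1-s) powr (\<kappa>-1) * s^n) \<partial>lborel) = Gamma \<kappa> * fact n / Gamma (\<kappa> + real n + 1)" .
qed

lemma kummer_integral:
  fixes \<kappa> z :: real
  assumes k: "\<kappa> > 0"
  shows "integrable lborel (\<lambda>s. indicator {0<..<1} s * complex_of_real ((1-s) powr (\<kappa>-1)) * cis (z * s))"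
    and "(\<integral>s. (indicator {0<..<1} s * complex_of_real ((1-s) powr (\<kappa>-1)) * cis (z * s)) \<partial>lborel)
          = complex_of_real (Gamma \<kappa>) * kummerM \<kappa> (\<i> * complex_of_real z)"
proof -
  define g where "g n s = indicator {0<..<1} s * ((1-s) powr (\<kappa>-1) * s^n :: real)" for n s
  define c where "c n = (\<i> * complex_of_real z)^n / fact n" for n
  define F where "F n s = complex_of_real (g n s) * c n" for n s
  have gint: "integrable lborel (g n)" for n unfolding g_def by (rule beta_moment(1)[OF k])
  have gval: "integral\<^sup>L lborel (g n) = Gamma \<kappa> * fact n / Gamma (\<kappa> + real n + 1)" for n
    unfolding g_def by (rule beta_moment(2)[OF k])
  have gnn: "g n s \<ge> 0" for n s unfolding g_def by (auto simp: indicator_def)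
  have Fint: "integrable lborel (F n)" for n unfolding F_def using gint by auto
  have Fval: "integral\<^sup>L lborel (F n) = complex_of_real (Gamma \<kappa> * fact n / Gamma (\<kappa> + real n + 1)) * c n" for n
    unfolding F_def using gval by simp
  have nF: "norm (F n s) = g n s * (\<bar>z\<bar>^n / fact n)" for n s
    unfolding F_def c_def using gnn[of n s] by (simp add: norm_mult norm_divide norm_power)
  have gle: "integral\<^sup>L lborel (g n) \<le> integral\<^sup>L lborel (g 0)" for n
    using gint by (intro integral_mono) (auto simp: g_def indicator_def power_le_one intro!: mult_left_mono)
  have sum_norm_int: "summable (\<lambda>n. \<integral>s. norm (F n s) \<partial>lborel)"
  proof (rule summable_comparison_test')
    show "summable (\<lambda>n. integral\<^sup>L lborel (g 0) * (inverse (fact n) * \<bar>z\<bar>^n))"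
      by (intro summable_mult summable_exp)
    fix n :: nat
    have "(\<integral>s. norm (F n s) \<partial>lborel) = integral\<^sup>L lborel (g n) * (\<bar>z\<bar>^n / fact n)"
      unfolding nF by simp
    moreover have "integral\<^sup>L lborel (g n) \<ge> 0" by (rule integral_nonneg_AE) (use gnn in auto)
    ultimately show "norm (\<integral>s. norm (F n s) \<partial>lborel) \<le> integral\<^sup>L lborel (g 0) * (inverse (fact n) * \<bar>z\<bar>^n)"
      using gle[of n] by (simp add: divide_inverse mult_right_mono mult.commute[of "inverse (fact n)"])
  qed
  have sum_pt: "AE s in lborel. summable (\<lambda>n. norm (F n s))"
  proof (rule AE_I2)
    fix s
    have "summable (\<lambda>n. (indicator {0<..<1} s * (1-s) powr (\<kappa>-1)) * (inverse (fact n) * \<bar>z * s\<bar>^n))"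
      by (intro summable_mult summable_exp)
    moreover have "norm (F n s) = (indicator {0<..<1} s * (1-s) powr (\<kappa>-1)) * (inverse (fact n) * \<bar>z * s\<bar>^n)" for n
      unfolding nF g_def by (cases "0 < s \<and> s < 1") (auto simp: abs_mult power_mult_distrib divide_inverse indicator_def)
    ultimately show "summable (\<lambda>n. norm (F n s))" by simp
  qed
  have Fsum: "(\<Sum>n. F n s) = indicator {0<..<1} s * complex_of_real ((1-s) powr (\<kappa>-1)) * cis (z * s)" for s
  proof -
    have "(\<lambda>n. (\<i> * complex_of_real (z * s))^n /\<^sub>R fact n) sums exp (\<i> * complex_of_real (z * s))"
      by (rule exp_converges)
    then have "(\<lambda>n. (indicator {0<..<1} s * complex_of_real ((1-s) powr (\<kappa>-1))) * ((\<i> * complex_of_real (z * s))^n /\<^sub>R fact n))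
        sums ((indicator {0<..<1} s * complex_of_real ((1-s) powr (\<kappa>-1))) * exp (\<i> * complex_of_real (z * s)))"
      by (rule sums_mult)
    moreover have "F n s = (indicator {0<..<1} s * complex_of_real ((1-s) powr (\<kappa>-1))) * ((\<i> * complex_of_real (z * s))^n /\<^sub>R fact n)" for n
      unfolding F_def g_def c_def by (simp add: scaleR_conv_of_real power_mult_distrib divide_inverse indicator_def)
    ultimately show ?thesis by (simp add: sums_unique[symmetric] cis_conv_exp mult_ac)
  qed
  have I1: "integrable lborel (\<lambda>s. \<Sum>n. F n s)"
    by (rule integrable_suminf[OF Fint sum_pt sum_norm_int])
  then show "integrable lborel (\<lambda>s. indicator {0<..<1} s * complex_of_real ((1-s) powr (\<kappa>-1)) * cis (z * s))"
    unfolding Fsum .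
  have tn: "integral\<^sup>L lborel (F n) = complex_of_real (Gamma \<kappa>) * ((\<i> * complex_of_real z)^n / Gamma (complex_of_real (\<kappa> + 1 + real n)))" for n
  proof -
    have "Gamma (\<kappa> + real n + 1) \<noteq> 0"
      using k by (intro Gamma_real_pos[THEN less_imp_neq, symmetric]) simp
    then show ?thesis
      unfolding Fval c_def Gamma_complex_of_real by (simp add: field_simps add_ac)
  qed
  have "(\<integral>s. (\<Sum>n. F n s) \<partial>lborel) = (\<Sum>n. integral\<^sup>L lborel (F n))"
    by (rule integral_suminf[OF Fint sum_pt sum_norm_int])
  also have "\<dots> = (\<Sum>n. complex_of_real (Gamma \<kappa>) * ((\<i> * complex_of_real z)^n / Gamma (complex_of_real (\<kappa> + 1 + real n))))"
    by (rule suminf_cong) (rule tn)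
  also have "\<dots> = complex_of_real (Gamma \<kappa>) * kummerM \<kappa> (\<i> * complex_of_real z)"
  proof -
    have "summable (\<lambda>n. integral\<^sup>L lborel (F n))"
      by (rule summable_integral[OF Fint sum_pt sum_norm_int])
    then have "summable (\<lambda>n. complex_of_real (Gamma \<kappa>) * ((\<i> * complex_of_real z)^n / Gamma (complex_of_real (\<kappa> + 1 + real n))))"
      by (simp only: tn)
    moreover have "Gamma \<kappa> \<noteq> 0" using Gamma_real_pos[OF k] by simp
    ultimately have "summable (\<lambda>n. (\<i> * complex_of_real z)^n / Gamma (complex_of_real (\<kappa> + 1 + real n)))"
      by (simp only: summable_cmult_iff of_real_eq_0_iff) simp
    then show ?thesis unfolding kummerM_def by (rule suminf_mult)
  qed
  finally show "(\<integral>s. (indicator {0<..<1} s * complex_of_real ((1-s) powr (\<kappa>-1)) * cis (z * s)) \<partial>lborel)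
          = complex_of_real (Gamma \<kappa>) * kummerM \<kappa> (\<i> * complex_of_real z)"
    unfolding Fsum .
qed

lemma inner_scaled:
  fixes \<kappa> t \<mu> :: real
  assumes k: "\<kappa> > 0" and t: "t > 0"
  shows "integrable lborel (\<lambda>x. indicator {0<..<t} x * complex_of_real ((t-x) powr (\<kappa>-1)) * cis (\<mu> * x))"
    and "(\<integral>x. (indicator {0<..<t} x * complex_of_real ((t-x) powr (\<kappa>-1)) * cis (\<mu> * x)) \<partial>lborel)
          = complex_of_real (t powr \<kappa> * Gamma \<kappa>) * kummerM \<kappa> (\<i> * complex_of_real (\<mu> * t))"
proof -
  define \<phi> where "\<phi> x = indicator {0<..<t} x * complex_of_real ((t-x) powr (\<kappa>-1)) * cis (\<mu> * x)" for x
  define \<psi> where "\<psi> s = indicator {0<..<1} s * complex_of_real ((1-s) powr (\<kappa>-1)) * cis ((\<mu> * t) * s)" for s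
  have ind: "(indicator {0<..<t} (0 + t * s) :: 'a::zero_neq_one) = indicator {0<..<1} s" for s
    using t by (auto simp: indicator_def mult_less_cancel_left2 zero_less_mult_iff)
  have eq: "\<phi> (0 + t * s) = complex_of_real (t powr (\<kappa>-1)) * \<psi> s" for s
  proof (cases "0 < s \<and> s < 1")
    case True
    then have "(t - t * s) powr (\<kappa>-1) = t powr (\<kappa>-1) * (1-s) powr (\<kappa>-1)"
      using t by (simp add: powr_mult[symmetric] right_diff_distrib)
    then show ?thesis using True unfolding \<phi>_def \<psi>_def ind by (simp add: mult_ac)
  next
    case False
    then show ?thesis unfolding \<phi>_def \<psi>_def ind by (simp add: indicator_def)
  qed
  have \<psi>int: "integrable lborel \<psi>" unfolding \<psi>_def by (rule kummer_integral(1)[OF k])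
  have \<psi>val: "integral\<^sup>L lborel \<psi> = complex_of_real (Gamma \<kappa>) * kummerM \<kappa> (\<i> * complex_of_real (\<mu> * t))"
    unfolding \<psi>_def by (rule kummer_integral(2)[OF k])
  have "integrable lborel (\<lambda>s. \<phi> (0 + t * s))" unfolding eq using \<psi>int by simp
  then show "integrable lborel (\<lambda>x. indicator {0<..<t} x * complex_of_real ((t-x) powr (\<kappa>-1)) * cis (\<mu> * x))"
    using lborel_integrable_real_affine_iff[of t \<phi> 0] t unfolding \<phi>_def by simp
  have "integral\<^sup>L lborel \<phi> = \<bar>t\<bar> *\<^sub>R (\<integral>s. \<phi> (0 + t * s) \<partial>lborel)"
    using t by (intro lborel_integral_real_affine) simp
  also have "\<dots> = complex_of_real (t * t powr (\<kappa>-1) * Gamma \<kappa>) * kummerM \<kappa> (\<i> * complex_of_real (\<mu> * t))"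
    unfolding eq using t by (simp add: \<psi>val scaleR_conv_of_real mult_ac)
  also have "t * t powr (\<kappa>-1) = t powr \<kappa>"
    using t by (simp add: powr_diff)
  finally show "(\<integral>x. (indicator {0<..<t} x * complex_of_real ((t-x) powr (\<kappa>-1)) * cis (\<mu> * x)) \<partial>lborel)
          = complex_of_real (t powr \<kappa> * Gamma \<kappa>) * kummerM \<kappa> (\<i> * complex_of_real (\<mu> * t))"
    unfolding \<phi>_def .
qed

lemma inner_scaled_real:
  fixes \<kappa> t :: real
  assumes k: "\<kappa> > 0" and t: "t > 0"
  shows "integrable lborel (\<lambda>x. indicator {0<..<t} x * (t-x) powr (\<kappa>-1))"
    and "(\<integral>x. (indicator {0<..<t} x * (t-x) powr (\<kappa>-1)) \<partial>lborel) = t powr \<kappa> / \<kappa>"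
proof -
  define \<phi> where "\<phi> x = indicator {0<..<t} x * (t-x) powr (\<kappa>-1)" for x
  define \<psi> where "\<psi> s = indicator {0<..<1} s * ((1-s) powr (\<kappa>-1) * s^0)" for s
  have ind: "(indicator {0<..<t} (0 + t * s) :: 'a::zero_neq_one) = indicator {0<..<1} s" for s
    using t by (auto simp: indicator_def mult_less_cancel_left2 zero_less_mult_iff)
  have eq: "\<phi> (0 + t * s) = t powr (\<kappa>-1) * \<psi> s" for s
  proof (cases "0 < s \<and> s < 1")
    case True
    then have "(t - t * s) powr (\<kappa>-1) = t powr (\<kappa>-1) * (1-s) powr (\<kappa>-1)"
      using t by (simp add: powr_mult[symmetric] right_diff_distrib)
    then show ?thesis using True unfolding \<phi>_def \<psi>_def ind by (simp add: mult_ac)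
  next
    case False
    then show ?thesis unfolding \<phi>_def \<psi>_def ind by (simp add: indicator_def)
  qed
  have \<psi>int: "integrable lborel \<psi>" unfolding \<psi>_def by (rule beta_moment(1)[OF k])
  have \<psi>val: "integral\<^sup>L lborel \<psi> = Gamma \<kappa> * fact 0 / Gamma (\<kappa> + real 0 + 1)"
    unfolding \<psi>_def by (rule beta_moment(2)[OF k])
  have "integrable lborel (\<lambda>s. \<phi> (0 + t * s))" unfolding eq using \<psi>int by simp
  then show "integrable lborel (\<lambda>x. indicator {0<..<t} x * (t-x) powr (\<kappa>-1))"
    using lborel_integrable_real_affine_iff[of t \<phi> 0] t unfolding \<phi>_def by simp
  have "integral\<^sup>L lborel \<phi> = \<bar>t\<bar> *\<^sub>R (\<integral>s. \<phi> (0 + t * s) \<partial>lborel)"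
    using t by (intro lborel_integral_real_affine) simp
  also have "\<dots> = t * t powr (\<kappa>-1) * (Gamma \<kappa> / Gamma (\<kappa> + 1))"
    unfolding eq using t by (simp add: \<psi>val)
  also have "t * t powr (\<kappa>-1) = t powr \<kappa>"
    using t by (simp add: powr_diff)
  also have "Gamma \<kappa> / Gamma (\<kappa> + 1) = 1 / \<kappa>"
  proof -
    have "\<kappa> \<notin> \<int>\<^sub>\<le>\<^sub>0" using k by (auto dest: nonpos_Ints_nonpos)
    moreover have "Gamma \<kappa> \<noteq> 0" using Gamma_real_pos[OF k] by linarith
    ultimately show ?thesis using k by (simp add: Gamma_plus1)
  qed
  finally show "(\<integral>x. (indicator {0<..<t} x * (t-x) powr (\<kappa>-1)) \<partial>lborel) = t powr \<kappa> / \<kappa>"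
    unfolding \<phi>_def by simp
qed
lemma cis_measurable[measurable]: "cis \<in> borel_measurable borel"
  by (intro borel_measurable_continuous_onI continuous_intros)


lemma half_line:
  fixes \<kappa> \<mu> R B :: real and h :: "real \<Rightarrow> complex"
  assumes k: "\<kappa> > 0" and hm[measurable]: "h \<in> borel_measurable borel"
    and hb: "\<And>t. norm (h t) \<le> B" and hs: "\<And>t. t > R \<Longrightarrow> h t = 0"
  shows "integrable lborel (\<lambda>x. indicator {0<..} x * (complex_of_real (1 / Gamma \<kappa>) *
            (LINT t:{x<..}|lborel. complex_of_real ((t - x) powr (\<kappa> - 1) * t powr (- \<kappa>)) * h t)) * cis (\<mu> * x))"
    and "integrable lborel (\<lambda>t. indicator {0<..} t * h t * kummerM \<kappa> (\<i> * complex_of_real (\<mu> * t)))"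
    and "(\<integral>x. (indicator {0<..} x * (complex_of_real (1 / Gamma \<kappa>) *
            (LINT t:{x<..}|lborel. complex_of_real ((t - x) powr (\<kappa> - 1) * t powr (- \<kappa>)) * h t)) * cis (\<mu> * x)) \<partial>lborel)
         = (\<integral>t. (indicator {0<..} t * h t * kummerM \<kappa> (\<i> * complex_of_real (\<mu> * t))) \<partial>lborel)"
proof -
  have G: "Gamma \<kappa> > 0" using k by simp
  define F where "F t x = (if 0 < x \<and> x < t then complex_of_real ((t - x) powr (\<kappa>-1) * t powr (-\<kappa>) / Gamma \<kappa>) * h t * cis (\<mu> * x) else 0)" for t x
  have Fm: "case_prod F \<in> borel_measurable (lborel \<Otimes>\<^sub>M lborel)"
    unfolding F_def[abs_def] lborel_prod measurable_lborel2 borel_prod[symmetric] by measurable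
  have Fpos: "F t x = complex_of_real (t powr (-\<kappa>) / Gamma \<kappa>) * h t *
      (indicator {0<..<t} x * complex_of_real ((t-x) powr (\<kappa>-1)) * cis (\<mu> * x))" if "t > 0" for t x
    using that by (auto simp: F_def indicator_def)
  have Fneg: "F t x = 0" if "t \<le> 0" for t x
    using that by (auto simp: F_def)
  have Fint: "integrable lborel (F t)" for t
  proof (cases "t > 0")
    case True
    show ?thesis unfolding Fpos[OF True]
      by (intro integrable_mult_right inner_scaled(1)[OF k True])
  next
    case False
    then have "F t = (\<lambda>x. 0)" using Fneg[of t] by (auto simp: fun_eq_iff)
    then show ?thesis by simp
  qed
  have normint: "(\<integral>x. norm (F t x) \<partial>lborel) = indicator {0<..R} t * (norm (h t) / (\<kappa> * Gamma \<kappa>))" for t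
  proof (cases "t > 0")
    case True
    have "norm (F t x) = (t powr (-\<kappa>) / Gamma \<kappa> * norm (h t)) * (indicator {0<..<t} x * (t-x) powr (\<kappa>-1))" for x
      unfolding Fpos[OF True] using G by (simp add: norm_mult norm_divide indicator_def abs_of_nonneg)
    then have "(\<integral>x. norm (F t x) \<partial>lborel) = (t powr (-\<kappa>) / Gamma \<kappa> * norm (h t)) * (t powr \<kappa> / \<kappa>)"
      using inner_scaled_real(2)[OF k True] by simp
    also have "\<dots> = norm (h t) / (\<kappa> * Gamma \<kappa>)"
      using True by (simp add: powr_minus field_simps)
    finally show ?thesis using True hs[of t] by (cases "t \<le> R") (auto simp: indicator_def)
  next
    case False
    then show ?thesis using Fneg[of t] by (simp add: indicator_def)
  qed
  have Pint: "integrable (lborel \<Otimes>\<^sub>M lborel) (case_prod F)"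
  proof (rule lborel_pair.Fubini_integrable)
    show "case_prod F \<in> borel_measurable (lborel \<Otimes>\<^sub>M lborel)" by (rule Fm)
    show "integrable lborel (\<lambda>t. \<integral>x. norm (case_prod F (t, x)) \<partial>lborel)"
      unfolding case_prod_conv normint
    proof (rule Bochner_Integration.integrable_bound[where f="\<lambda>t. (B / (\<kappa> * Gamma \<kappa>)) * indicator {0<..R} t :: real"])
      show "integrable lborel (\<lambda>t. (B / (\<kappa> * Gamma \<kappa>)) * indicator {0<..R} t :: real)"
        by (intro integrable_mult_right integrable_real_indicator emeasure_bounded_finite) auto
      show "(\<lambda>t. indicator {0<..R} t * (norm (h t) / (\<kappa> * Gamma \<kappa>))) \<in> borel_measurable lborel"
        by measurable
      show "AE t in lborel. norm (indicator {0<..R} t * (norm (h t) / (\<kappa> * Gamma \<kappa>)))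
              \<le> norm ((B / (\<kappa> * Gamma \<kappa>)) * indicator {0<..R} t :: real)"
      proof (rule AE_I2)
        fix t
        have "norm (h t) / (\<kappa> * Gamma \<kappa>) \<le> \<bar>B\<bar> / (\<kappa> * Gamma \<kappa>)"
          using hb[of t] k G by (intro divide_right_mono) auto
        moreover have "0 \<le> norm (h t) / (\<kappa> * Gamma \<kappa>)" using k G by simp
        moreover have "\<bar>\<kappa> * Gamma \<kappa>\<bar> = \<kappa> * Gamma \<kappa>" using k G by simp
        moreover have "B \<le> \<bar>B\<bar>" by simp
        ultimately show "norm (indicator {0<..R} t * (norm (h t) / (\<kappa> * Gamma \<kappa>)))
              \<le> norm ((B / (\<kappa> * Gamma \<kappa>)) * indicator {0<..R} t :: real)"
          by (auto simp: indicator_def)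
      qed
    qed
    show "AE t in lborel. integrable lborel (\<lambda>x. case_prod F (t, x))"
      using Fint by simp
  qed
  have tmarg: "(\<integral>x. F t x \<partial>lborel) = indicator {0<..} t * h t * kummerM \<kappa> (\<i> * complex_of_real (\<mu> * t))" for t
  proof (cases "t > 0")
    case True
    have "(\<integral>x. F t x \<partial>lborel) = complex_of_real (t powr (-\<kappa>) / Gamma \<kappa>) * h t *
        (complex_of_real (t powr \<kappa> * Gamma \<kappa>) * kummerM \<kappa> (\<i> * complex_of_real (\<mu> * t)))"
      unfolding Fpos[OF True] integral_mult_right_zero inner_scaled(2)[OF k True] ..
    also have "\<dots> = complex_of_real (t powr (-\<kappa>) / Gamma \<kappa> * (t powr \<kappa> * Gamma \<kappa>)) * h t * kummerM \<kappa> (\<i> * complex_of_real (\<mu> * t))"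
      by (simp add: mult_ac)
    also have "t powr (-\<kappa>) / Gamma \<kappa> * (t powr \<kappa> * Gamma \<kappa>) = 1"
      using True G by (simp add: powr_minus field_simps)
    finally show ?thesis using True by simp
  next
    case False
    then show ?thesis using Fneg[of t] by (simp add: indicator_def)
  qed
  have xmarg: "(\<integral>t. F t x \<partial>lborel) = indicator {0<..} x * (complex_of_real (1 / Gamma \<kappa>) *
            (LINT t:{x<..}|lborel. complex_of_real ((t - x) powr (\<kappa> - 1) * t powr (- \<kappa>)) * h t)) * cis (\<mu> * x)" for x
  proof (cases "x > 0")
    case True
    have "F t x = (complex_of_real (1 / Gamma \<kappa>) * cis (\<mu> * x)) *
        (indicator {x<..} t *\<^sub>R (complex_of_real ((t - x) powr (\<kappa> - 1) * t powr (- \<kappa>)) * h t))" for t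
      using True by (auto simp: F_def indicator_def)
    then have "(\<integral>t. F t x \<partial>lborel) = (complex_of_real (1 / Gamma \<kappa>) * cis (\<mu> * x)) *
        (\<integral>t. (indicator {x<..} t *\<^sub>R (complex_of_real ((t - x) powr (\<kappa> - 1) * t powr (- \<kappa>)) * h t)) \<partial>lborel)"
      by (simp only: integral_mult_right_zero)
    then show ?thesis using True unfolding set_lebesgue_integral_def by (simp only: mult_ac indicator_simps mult_1_left greaterThan_iff)
  next
    case False
    then show ?thesis by (simp add: F_def indicator_def)
  qed
  show "integrable lborel (\<lambda>t. indicator {0<..} t * h t * kummerM \<kappa> (\<i> * complex_of_real (\<mu> * t)))"
    using lborel_pair.integrable_fst[OF Pint] unfolding tmarg .
  show "integrable lborel (\<lambda>x. indicator {0<..} x * (complex_of_real (1 / Gamma \<kappa>) *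
            (LINT t:{x<..}|lborel. complex_of_real ((t - x) powr (\<kappa> - 1) * t powr (- \<kappa>)) * h t)) * cis (\<mu> * x))"
    using lborel_pair.integrable_snd[OF Pint] unfolding xmarg .
  show "(\<integral>x. (indicator {0<..} x * (complex_of_real (1 / Gamma \<kappa>) *
            (LINT t:{x<..}|lborel. complex_of_real ((t - x) powr (\<kappa> - 1) * t powr (- \<kappa>)) * h t)) * cis (\<mu> * x)) \<partial>lborel)
         = (\<integral>t. (indicator {0<..} t * h t * kummerM \<kappa> (\<i> * complex_of_real (\<mu> * t))) \<partial>lborel)"
    using lborel_pair.integral_snd[OF Pint] lborel_pair.integral_fst[OF Pint] unfolding tmarg xmarg by simp
qed

theorem proposition5p3:
  fixes \<kappa> :: real and f :: "real \<Rightarrow> complex" and lam :: real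
  assumes "\<kappa> > 0" and "test_function f"
  shows "kummer_transform \<kappa> f lam = fourier_transform (dual_intertwining \<kappa> f) lam"
proof -
  note k = assms(1)
  have diff: "\<And>x. f differentiable (at x)" and cpt: "compact (closure {x. f x \<noteq> 0})"
    using assms(2) unfolding test_function_def by (metis vderiv_iter.simps(1))+
  have cont: "continuous_on UNIV f"
    using diff by (simp add: continuous_at_imp_continuous_on differentiable_imp_continuous_within)
  have fm[measurable]: "f \<in> borel_measurable borel"
    using cont by (rule borel_measurable_continuous_onI)
  define S where "S = closure {x. f x \<noteq> 0}"
  have "bounded S" using cpt unfolding S_def by (rule compact_imp_bounded)
  then obtain R where R: "\<And>x. x \<in> S \<Longrightarrow> norm x \<le> R" by (auto simp: bounded_iff)
  have inS: "t \<in> S" if "f t \<noteq> 0" for t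
  proof -
    have "t \<in> {x. f x \<noteq> 0}" using that by simp
    then show "t \<in> S" unfolding S_def by (rule subsetD[OF closure_subset])
  qed
  have fz: "f t = 0" if "\<bar>t\<bar> > R" for t
  proof (rule ccontr)
    assume "f t \<noteq> 0"
    then have "norm t \<le> R" by (intro R inS)
    then show False using that unfolding real_norm_def by linarith
  qed
  have "compact S" using cpt unfolding S_def .
  then have "compact (f ` S)"
    by (rule compact_continuous_image[OF continuous_on_subset[OF cont subset_UNIV], rotated])
  then have "bounded (f ` S)" by (rule compact_imp_bounded)
  then obtain B where B0: "\<And>y. y \<in> f ` S \<Longrightarrow> norm y \<le> B" by (auto simp: bounded_iff)
  have fb: "norm (f t) \<le> \<bar>B\<bar>" for t
  proof (cases "f t = 0")
    case True then show ?thesis by simp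
  next
    case False
    then have "f t \<in> f ` S" using inS[OF False] by (rule_tac imageI)
    then have "norm (f t) \<le> B" by (rule B0)
    then show ?thesis by linarith
  qed
  define K where "K h x = complex_of_real (1 / Gamma \<kappa>) *
            (LINT t:{x<..}|lborel. complex_of_real ((t - x) powr (\<kappa> - 1) * t powr (- \<kappa>)) * h t)" for h :: "real \<Rightarrow> complex" and x
  define M where "M x = kummerM \<kappa> (\<i> * complex_of_real (lam * x))" for x
  define D where "D = dual_intertwining \<kappa> f"
  have fz1: "f t = 0" if "t > R" for t using fz[of t] that by simp
  have fz2: "f (- t) = 0" if "t > R" for t using fz[of "-t"] that by simp
  have fnm: "(\<lambda>t. f (- t)) \<in> borel_measurable borel" by measurable
  have fbn: "norm (f (- t)) \<le> \<bar>B\<bar>" for t by (rule fb)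
  note P = half_line[where \<kappa>=\<kappa> and h=f and B="\<bar>B\<bar>" and R=R and \<mu>=lam, OF k fm fb fz1]
  note N = half_line[where \<kappa>=\<kappa> and h="\<lambda>t. f (- t)" and B="\<bar>B\<bar>" and R=R and \<mu>="- lam", OF k fnm fbn fz2]
  have Dpos: "D x = K f x" if "x > 0" for x
  proof -
    have "\<bar>x\<bar> = x" "sgn x = 1" "x \<noteq> 0" using that by auto
    then show ?thesis unfolding D_def K_def dual_intertwining_def by (simp only: if_False mult_1_left)
  qed
  have Dneg: "D (- y) = K (\<lambda>t. f (- t)) y" if "y > 0" for y
  proof -
    have "\<bar>- y\<bar> = y" "sgn (- y) = -1" "- y \<noteq> 0" using that by auto
    then show ?thesis unfolding D_def K_def dual_intertwining_def by (simp only: if_False mult_minus1)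
  qed
  have D0: "D 0 = 0" unfolding D_def dual_intertwining_def by simp
  define A where "A x = indicator {0<..} x * K f x * cis (lam * x)" for x
  define Q where "Q x = indicator {..<0} x * D x * cis (lam * x)" for x
  define Aneg where "Aneg y = indicator {0<..} y * K (\<lambda>t. f (- t)) y * cis (- lam * y)" for y
  have QA: "Q (0 + (-1) * y) = Aneg y" for y
    unfolding Q_def Aneg_def using Dneg[of y] by (cases "y > 0") (auto simp: indicator_def)
  have Aint: "integrable lborel A" using P(1) unfolding A_def K_def .
  have Anegint: "integrable lborel Aneg" using N(1) unfolding Aneg_def K_def by simp
  have Qint: "integrable lborel Q"
    using lborel_integrable_real_affine_iff[of "-1" Q 0] Anegint unfolding QA by simp
  have Qval: "integral\<^sup>L lborel Q = integral\<^sup>L lborel Aneg"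
    using lborel_integral_real_affine[of "-1" Q 0] unfolding QA by simp
  have pw1: "(\<lambda>x. D x * cis (lam * x)) = (\<lambda>x. A x + Q x)"
  proof (rule ext)
    fix x
    show "D x * cis (lam * x) = A x + Q x"
      unfolding A_def Q_def using Dpos[of x] D0
      by (cases "x > 0"; cases "x < 0") (simp_all add: indicator_def)
  qed
  have "fourier_transform D lam = (\<integral>x. (A x + Q x) \<partial>lborel)"
    unfolding fourier_transform_def pw1 ..
  also have "\<dots> = integral\<^sup>L lborel A + integral\<^sup>L lborel Aneg"
    using Aint Qint Qval by simp
  finally have rhs: "fourier_transform D lam = integral\<^sup>L lborel A + integral\<^sup>L lborel Aneg" .
  define Tp where "Tp t = indicator {0<..} t * f t * M t" for t
  define Tn where "Tn t = indicator {0<..} t * f (- t) * kummerM \<kappa> (\<i> * complex_of_real (- lam * t))" for t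
  define W where "W u = indicator {..<0} u * f u * M u" for u
  have WT: "W (0 + (-1) * t) = Tn t" for t
    unfolding W_def Tn_def M_def by (cases "t > 0") (auto simp: indicator_def)
  have Tpint: "integrable lborel Tp" using P(2) unfolding Tp_def M_def .
  have Tnint: "integrable lborel Tn" using N(2) unfolding Tn_def by simp
  have Wint: "integrable lborel W"
    using lborel_integrable_real_affine_iff[of "-1" W 0] Tnint unfolding WT by simp
  have Wval: "integral\<^sup>L lborel W = integral\<^sup>L lborel Tn"
    using lborel_integral_real_affine[of "-1" W 0] unfolding WT by simp
  have A_eq: "integral\<^sup>L lborel A = integral\<^sup>L lborel Tp"
    using P(3) unfolding A_def Tp_def K_def M_def .
  have An_eq: "integral\<^sup>L lborel Aneg = integral\<^sup>L lborel Tn"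
    using N(3) unfolding Aneg_def Tn_def K_def by simp
  define Z where "Z x = complex_of_real (indicator {0::real} x) * (f 0 * M 0)" for x :: real
  have Zint: "integrable lborel Z" unfolding Z_def
    by (intro integrable_mult_left integrable_of_real integrable_real_indicator) auto
  have Zval: "integral\<^sup>L lborel Z = 0" unfolding Z_def by simp
  have pw2: "(\<lambda>x. f x * kummerM \<kappa> (\<i> * complex_of_real (lam * x))) = (\<lambda>x. Tp x + W x + Z x)"
  proof (rule ext)
    fix x
    show "f x * kummerM \<kappa> (\<i> * complex_of_real (lam * x)) = Tp x + W x + Z x"
      unfolding Tp_def W_def M_def Z_def by (cases "x > 0"; cases "x < 0") (auto simp: indicator_def)
  qed
  have "kummer_transform \<kappa> f lam = (\<integral>x. (Tp x + W x + Z x) \<partial>lborel)"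
    unfolding kummer_transform_def pw2 ..
  also have "\<dots> = integral\<^sup>L lborel Tp + integral\<^sup>L lborel W"
    using Tpint Wint Zint Zval by simp
  also have "\<dots> = integral\<^sup>L lborel Tp + integral\<^sup>L lborel Tn"
    using Wval by simp
  finally show ?thesis using rhs A_eq An_eq unfolding D_def by simp
qed

end
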